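(* Let $d\ge2$ and let $\rho$ be a finite-dimensional representation of the Jacobi algebra $\mathbb C\langle a,b,c\rangle/([b,c],\,[c,a],\,[a,b]+d\,c^{d-1})$. Then each of the operators $\rho(a),\rho(b),\rho(c)$ preserves the generalized eigenspaces of each of the others, and $\rho(c)$ is nilpotent (its only generalized eigenvalue is $0$). Consequently $\rho$ decomposes canonically as $\rho\cong\bigoplus_{s\in\Sigma}\rho_s$ into nonzero submodules, with $\Sigma\subset\mathbb C^2$ finite, where for $s=(s_1,s_2)$ the generalized eigenvalues of $\rho(a),\rho(b),\rho(c)$ on $\rho_s$ are $s_1,s_2,0$ respectively.
   Context: This algebra is the Jacobi algebra of the three-loop quiver with potential $W_d=[a,b]c+c^d$, i.e. the quotient of the free algebra by the cyclic derivatives of $W_d$ with respect to $a,b,c$. *)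

theory Defs
  imports "HOL-Analysis.Analysis"
begin

definition mpow :: "complex^'n^'n \<Rightarrow> nat \<Rightarrow> complex^'n^'n" where
  "mpow X k = (((**) X) ^^ k) (mat 1)"

definition gen_eigenspace :: "complex^'n^'n \<Rightarrow> complex \<Rightarrow> (complex^'n) set" where
  "gen_eigenspace X \<mu> = {v. \<exists>k. mpow (X - mat \<mu>) k *v v = 0}"

definition gen_eigenvalues_on :: "complex^'n^'n \<Rightarrow> (complex^'n) set \<Rightarrow> complex set" where
  "gen_eigenvalues_on X W = {\<mu>. \<exists>v\<in>W. v \<noteq> 0 \<and> v \<in> gen_eigenspace X \<mu>}"

definition csubspace :: "(complex^'n) set \<Rightarrow> bool" where
  "csubspace W \<longleftrightarrow> 0 \<in> W \<and> (\<forall>x\<in>W. \<forall>y\<in>W. x + y \<in> W) \<and> (\<forall>c x. x \<in> W \<longrightarrow> c *s x \<in> W)"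

definition invariant :: "complex^'n^'n \<Rightarrow> (complex^'n) set \<Rightarrow> bool" where
  "invariant X W \<longleftrightarrow> (\<forall>v\<in>W. X *v v \<in> W)"

definition is_direct_sum :: "'s set \<Rightarrow> ('s \<Rightarrow> (complex^'n) set) \<Rightarrow> bool" where
  "is_direct_sum S V \<longleftrightarrow>
     (\<forall>v. \<exists>f. (\<forall>s\<in>S. f s \<in> V s) \<and> v = (\<Sum>s\<in>S. f s)) \<and>
     (\<forall>f. (\<forall>s\<in>S. f s \<in> V s) \<and> (\<Sum>s\<in>S. f s) = 0 \<longrightarrow> (\<forall>s\<in>S. f s = 0))"

end

theory Submission imports Defs "HOL-Computational_Algebra.Computational_Algebra" "HOL-Computational_Algebra.Field_as_Ring" begin

lemma mpow_0: "mpow X 0 = mat 1" by (simp add: mpow_def)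
lemma mpow_Suc: "mpow X (Suc k) = X ** mpow X k" by (simp add: mpow_def)
lemma mpow_Suc_v: "mpow X (Suc k) *v v = X *v (mpow X k *v v)"
  by (simp add: mpow_Suc matrix_vector_mul_assoc)
lemma mat_v: "mat c *v v = c *s (v::complex^'n)"
  by (simp add: vec_eq_iff matrix_vector_mult_def mat_def if_distrib if_distribR cong: if_cong)
lemma sub_mat_v: "(X - mat c) *v v = X *v v - c *s (v::complex^'n)"
  by (simp add: matrix_vector_mult_diff_rdistrib mat_v)

definition pe :: "complex poly \<Rightarrow> complex^'n^'n \<Rightarrow> complex^'n \<Rightarrow> complex^'n" where
  "pe p X v = (\<Sum>i\<le>degree p. coeff p i *s (mpow X i *v v))"

lemma pe_upto: "degree p \<le> N \<Longrightarrow> pe p X v = (\<Sum>i\<le>N. coeff p i *s (mpow X i *v v))"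
  unfolding pe_def by (rule sum.mono_neutral_left) (auto simp: coeff_eq_0)

lemma pe_0[simp]: "pe 0 X v = 0" by (simp add: pe_def)

lemma pe_add: "pe (p+q) X v = pe p X v + pe q X v"
proof -
  let ?N = "max (degree p) (degree q)"
  have "pe (p+q) X v = (\<Sum>i\<le>?N. coeff (p+q) i *s (mpow X i *v v))"
    by (rule pe_upto) (simp add: degree_add_le)
  also have "\<dots> = (\<Sum>i\<le>?N. coeff p i *s (mpow X i *v v)) + (\<Sum>i\<le>?N. coeff q i *s (mpow X i *v v))"
    by (simp add: vector_sadd_rdistrib sum.distrib)
  also have "\<dots> = pe p X v + pe q X v" by (simp add: pe_upto[of p ?N] pe_upto[of q ?N])
  finally show ?thesis .
qed

lemma pe_diff: "pe (p-q) X v = pe p X v - pe q X v"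
  by (metis add_diff_cancel diff_add_cancel pe_add)

lemma pe_smult: "pe (smult a p) X v = a *s pe p X v"
proof -
  have "pe (smult a p) X v = (\<Sum>i\<le>degree p. coeff (smult a p) i *s (mpow X i *v v))"
    by (rule pe_upto) (simp add: degree_smult_le)
  then show ?thesis by (simp add: pe_def vec.scale_sum_right vector_smult_assoc)
qed

lemma pe_pCons: "pe (pCons a p) X v = a *s v + X *v pe p X v"
proof -
  have "pe (pCons a p) X v = (\<Sum>i\<le>Suc (degree p). coeff (pCons a p) i *s (mpow X i *v v))"
    by (rule pe_upto) (simp add: degree_pCons_le)
  also have "\<dots> = a *s v + (\<Sum>i\<le>degree p. coeff p i *s (X *v (mpow X i *v v)))"
    by (subst sum.atMost_Suc_shift) (simp add: mpow_0 mpow_Suc_v del: sum.atMost_Suc)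
  also have "\<dots> = a *s v + X *v pe p X v"
    by (simp add: pe_def vec.sum vector_scalar_commute)
  finally show ?thesis .
qed

lemma pe_mult: "pe (p*q) X v = pe p X (pe q X v)"
proof (induction p)
  case 0 then show ?case by simp
next
  case (pCons a p)
  then show ?case by (simp add: mult_pCons_left pe_add pe_smult pe_pCons)
qed

lemma pe_const: "pe [:c:] X v = c *s v"
  using pe_pCons[of c 0 X v] by simp

lemma pe_one[simp]: "pe 1 X v = v"
  by (simp add: one_pCons pe_const)

lemma pe_x: "pe [:0,1:] X v = X *v v"
  using pe_pCons[of 0 "[:1:]" X v] by (simp add: pe_const)

lemma pe_lin: "pe [:-z,1:] X v = (X - mat z) *v v"
  using pe_pCons[of "-z" "[:1:]" X v] by (simp add: pe_const sub_mat_v vector_smult_lneg)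

lemma pe_commute: "X *v pe p X v = pe p X (X *v v)"
  by (metis mult.commute pe_mult pe_x)

lemma pe_vadd: "pe p X (v + w) = pe p X v + pe p X w"
  by (simp add: pe_def matrix_vector_right_distrib vector_add_ldistrib sum.distrib)

lemma pe_vscale: "pe p X (c *s v) = c *s pe p X v"
  by (simp add: pe_def vector_scalar_commute vec.scale_sum_right vector_smult_assoc mult.commute)

lemma pe_vzero[simp]: "pe p X 0 = 0"
  by (simp add: pe_def)

lemma pe_vsum: "pe p X (\<Sum>i\<in>S. f i) = (\<Sum>i\<in>S. pe p X (f i))"
  by (induction S rule: infinite_finite_induct) (auto simp: pe_vadd)

lemma pe_psum: "pe (\<Sum>i\<in>S. f i) X v = (\<Sum>i\<in>S. pe (f i) X v)"
  by (induction S rule: infinite_finite_induct) (auto simp: pe_add)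

lemma pe_monom: "pe (monom c i) X v = c *s (mpow X i *v v)"
proof -
  have "pe (monom c i) X v = (\<Sum>j\<le>i. coeff (monom c i) j *s (mpow X j *v v))"
    by (rule pe_upto) (simp add: degree_monom_le)
  also have "\<dots> = c *s (mpow X i *v v)"
    by (simp add: coeff_monom if_distrib if_distribR cong: if_cong)
  finally show ?thesis .
qed

lemma pe_pow_lin: "pe ([:-z,1:]^m) X v = mpow (X - mat z) m *v v"
proof (induction m arbitrary: v)
  case 0 then show ?case by (simp add: mpow_0)
next
  case (Suc m)
  have "pe ([:-z,1:]^Suc m) X v = pe [:-z,1:] X (pe ([:-z,1:]^m) X v)"
    by (simp only: power_Suc pe_mult)
  then show ?case by (simp add: Suc pe_lin mpow_Suc_v)
qed

lemma pe_eig: "X *v u = \<mu> *s u \<Longrightarrow> pe p X u = poly p \<mu> *s u"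
  by (induction p) (auto simp: pe_pCons vector_sadd_rdistrib vector_scalar_commute vector_smult_assoc)

lemma ge_pe: "gen_eigenspace X z = {v. \<exists>k. pe ([:-z,1:]^k) X v = 0}"
  by (simp add: gen_eigenspace_def pe_pow_lin)

lemma csub_sum: "csubspace W \<Longrightarrow> (\<forall>i\<in>S. f i \<in> W) \<Longrightarrow> sum f S \<in> W"
  by (induction S rule: infinite_finite_induct) (auto simp: csubspace_def)

lemma csub_mpow: "csubspace W \<Longrightarrow> invariant X W \<Longrightarrow> v \<in> W \<Longrightarrow> mpow X i *v v \<in> W"
  by (induction i) (auto simp: mpow_0 mpow_Suc_v invariant_def)

lemma csub_pe: "csubspace W \<Longrightarrow> invariant X W \<Longrightarrow> v \<in> W \<Longrightarrow> pe p X v \<in> W"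
  unfolding pe_def by (rule csub_sum) (auto simp: csub_mpow csubspace_def)

lemma coprime_kill:
  assumes "coprime q r" "pe q X w = 0" "pe r X w = 0"
  shows "w = 0"
proof -
  have g: "gcd q r = 1" using assms(1) by (rule coprime_imp_gcd_eq_1)
  obtain x y where xy: "x*q + y*r = 1"
    using bezout_coefficients_fst_snd[of q r] g by metis
  have "w = pe (x*q + y*r) X w" by (simp add: xy)
  also have "\<dots> = 0" by (simp add: pe_add pe_mult assms)
  finally show ?thesis .
qed

lemma coprime_lin:
  assumes "poly r z \<noteq> 0" shows "coprime ([:-z,1:]^m) (r::complex poly)"
proof -
  have p: "prime_elem [:-z,1::complex:]" by (rule prime_elem_linear_field_poly) simp
  have "\<not> [:-z,1:] dvd r" using dvd_iff_poly_eq_0[of "-z" r] assms by simp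
  then have "coprime [:-z,1:] r" by (rule prime_elem_imp_coprime[OF p])
  then show ?thesis by simp
qed

lemma ge_unique2:
  assumes "v \<in> gen_eigenspace X z" "v \<in> gen_eigenspace X \<mu>" "z \<noteq> \<mu>"
  shows "v = 0"
proof -
  obtain k j where "pe ([:-z,1:]^k) X v = 0" "pe ([:-\<mu>,1:]^j) X v = 0"
    using assms by (auto simp: ge_pe)
  moreover have "coprime ([:-z,1:]^k) ([:-\<mu>,1:]^j)"
    by (rule coprime_lin) (use assms(3) in \<open>simp add: poly_power\<close>)
  ultimately show ?thesis using coprime_kill by blast
qed

lemma ge_csub: "csubspace (gen_eigenspace X z)"
proof -
  have add: "x + y \<in> gen_eigenspace X z" if hx: "x \<in> gen_eigenspace X z" and hy: "y \<in> gen_eigenspace X z" for x y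
  proof -
    obtain k where k: "pe ([:-z,1:]^k) X x = 0" using hx unfolding ge_pe by blast
    obtain j where j: "pe ([:-z,1:]^j) X y = 0" using hy unfolding ge_pe by blast
    have "pe ([:-z,1:]^(k+j)) X x = 0"
      by (simp add: power_add pe_mult mult.commute[of "[:-z,1:]^k"] k)
    moreover have "pe ([:-z,1:]^(k+j)) X y = 0"
      by (simp add: power_add pe_mult j)
    ultimately have "pe ([:-z,1:]^(k+j)) X (x+y) = 0" by (simp add: pe_vadd)
    then show ?thesis unfolding ge_pe by blast
  qed
  have zero: "0 \<in> gen_eigenspace X z" unfolding ge_pe by (auto intro: exI[of _ 0])
  have sc: "c *s x \<in> gen_eigenspace X z" if hx: "x \<in> gen_eigenspace X z" for c x
  proof -
    obtain k where k: "pe ([:-z,1:]^k) X x = 0" using hx unfolding ge_pe by blast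
    then have "pe ([:-z,1:]^k) X (c *s x) = 0" by (simp add: pe_vscale)
    then show ?thesis unfolding ge_pe by blast
  qed
  show ?thesis unfolding csubspace_def using add zero sc by blast
qed

lemma ge_inv: "invariant X (gen_eigenspace X z)"
  unfolding invariant_def ge_pe
proof (intro ballI)
  fix v assume "v \<in> {v. \<exists>k. pe ([:- z, 1:] ^ k) X v = 0}"
  then obtain k where "pe ([:- z, 1:] ^ k) X v = 0" by blast
  then have "pe ([:- z, 1:] ^ k) X (X *v v) = 0" by (simp add: pe_commute[symmetric])
  then show "X *v v \<in> {v. \<exists>k. pe ([:- z, 1:] ^ k) X v = 0}" by blast
qed

lemma ge_pe_closed: "v \<in> gen_eigenspace X z \<Longrightarrow> pe p X v \<in> gen_eigenspace X z"
  by (rule csub_pe[OF ge_csub ge_inv])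

lemma ge_sum_unique:
  assumes "finite S" "\<forall>z\<in>S. g z \<in> gen_eigenspace X z" "(\<Sum>z\<in>S. g z) = 0"
  shows "\<forall>z\<in>S. g z = 0"
  using assms
proof (induction S arbitrary: g rule: finite_induct)
  case empty then show ?case by simp
next
  case (insert \<mu> S)
  obtain k where k: "pe ([:-\<mu>,1:]^k) X (g \<mu>) = 0"
    using insert.prems(1) by (auto simp: ge_pe)
  let ?T = "pe ([:-\<mu>,1:]^k) X"
  have s: "(\<Sum>z\<in>S. g z) = - g \<mu>"
    using insert.prems(2) insert.hyps by (simp add: eq_neg_iff_add_eq_0 add.commute)
  have "(\<Sum>z\<in>S. ?T (g z)) = 0"
  proof -
    have "(\<Sum>z\<in>S. ?T (g z)) = ?T (\<Sum>z\<in>S. g z)" by (simp add: pe_vsum)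
    also have "\<dots> = ?T ((-1) *s g \<mu>)" by (simp only: s vector_sneg_minus1)
    also have "\<dots> = 0" by (simp only: pe_vscale k vector_smult_rzero)
    finally show ?thesis .
  qed
  then have T0: "\<forall>z\<in>S. ?T (g z) = 0"
    using insert.IH[of "\<lambda>z. ?T (g z)"] insert.prems(1) by (auto intro: ge_pe_closed)
  have "\<forall>z\<in>S. g z = 0"
  proof
    fix z assume z: "z \<in> S"
    then have zmu: "z \<noteq> \<mu>" using insert.hyps by auto
    obtain j where j: "pe ([:-z,1:]^j) X (g z) = 0"
      using insert.prems(1) z by (auto simp: ge_pe)
    have "coprime ([:-z,1:]^j) ([:-\<mu>,1:]^k)"
      by (rule coprime_lin) (use zmu in \<open>simp add: poly_power\<close>)
    then show "g z = 0" using coprime_kill j T0 z by blast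
  qed
  moreover then have "g \<mu> = 0" using s by simp
  ultimately show ?case by simp
qed

lemma annih_vec:
  fixes X :: "complex^'n^'n"
  shows "\<exists>p. p \<noteq> 0 \<and> pe p X w = 0"
proof -
  let ?D = "CARD('n)"
  define g where "g i = mpow X i *v w" for i
  show ?thesis
  proof (cases "inj_on g {..?D}")
    case False
    then obtain i j where ij: "i \<noteq> j" "g i = g j" by (auto simp: inj_on_def)
    let ?p = "monom 1 i - monom (1::complex) j"
    have "coeff ?p i = 1" using ij by (simp add: coeff_monom)
    then have "?p \<noteq> 0" by (metis coeff_0 zero_neq_one)
    moreover have "pe ?p X w = 0" using ij by (simp add: pe_diff pe_monom g_def)
    ultimately show ?thesis by blast
  next
    case True
    let ?S = "g ` {..?D}"
    have card: "card ?S = Suc ?D" using card_image[OF True] by simp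
    have "vec.dependent ?S"
    proof (rule ccontr)
      assume "\<not> vec.dependent ?S"
      then have "card ?S \<le> vec.dim ?S" using vec.independent_bound_general by blast
      also have "\<dots> \<le> vec.dim (UNIV::(complex^'n) set)" by (rule vec.dim_subset) simp
      also have "\<dots> = ?D" by (simp add: card_cart_basis)
      finally show False using card by simp
    qed
    then obtain u where u: "\<exists>v\<in>?S. u v \<noteq> 0" "(\<Sum>v\<in>?S. u v *s v) = 0"
      using vec.dependent_finite[of ?S] by auto
    define p where "p = (\<Sum>i\<le>?D. monom (u (g i)) i)"
    have "pe p X w = (\<Sum>i\<le>?D. u (g i) *s g i)" by (simp add: p_def pe_psum pe_monom g_def)
    also have "\<dots> = (\<Sum>v\<in>?S. u v *s v)" by (simp add: sum.reindex[OF True])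
    also have "\<dots> = 0" by (rule u(2))
    finally have "pe p X w = 0" .
    moreover obtain i where "i \<le> ?D" "u (g i) \<noteq> 0" using u(1) by auto
    then have "coeff p i \<noteq> 0" by (simp add: p_def coeff_sum_monom)
    then have "p \<noteq> 0" by auto
    ultimately show ?thesis by blast
  qed
qed

lemma annih:
  fixes X :: "complex^'n^'n"
  shows "\<exists>p. p \<noteq> 0 \<and> (\<forall>v. pe p X v = 0)"
proof -
  have "\<forall>i::'n. \<exists>q. q \<noteq> 0 \<and> pe q X (axis i 1) = 0" using annih_vec by blast
  then obtain q where q: "\<And>i. q i \<noteq> 0" "\<And>i. pe (q i) X (axis i 1) = 0" by metis
  define p where "p = (\<Prod>i\<in>UNIV. q i)"
  have "p \<noteq> 0" using q(1) by (simp add: p_def)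
  moreover have "pe p X v = 0" for v
  proof -
    have ax: "pe p X (axis i 1) = 0" for i
    proof -
      have "p = (\<Prod>j\<in>UNIV-{i}. q j) * q i" by (simp add: p_def prod.remove mult.commute)
      then show ?thesis by (simp add: pe_mult q(2))
    qed
    have "pe p X v = pe p X (\<Sum>i\<in>UNIV. (v$i) *s axis i 1)" by (simp add: basis_expansion)
    also have "\<dots> = 0" by (simp add: pe_vsum pe_vscale ax)
    finally show ?thesis .
  qed
  ultimately show ?thesis by blast
qed

lemma bezout_poly:
  assumes "coprime q (r::complex poly)" obtains x y where "x*q + y*r = 1"
proof -
  have g: "gcd q r = 1" using assms by (rule coprime_imp_gcd_eq_1)
  show ?thesis using bezout_coefficients_fst_snd[of q r] g that by metis
qed

lemma decomp_poly:
  assumes "finite Z" "csubspace W" "invariant X W" "w \<in> W" "pe (\<Prod>z\<in>Z. [:-z,1:]^(m z)) X w = 0"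
  shows "\<exists>g. (\<forall>z\<in>Z. g z \<in> W \<and> g z \<in> gen_eigenspace X z) \<and> w = (\<Sum>z\<in>Z. g z)"
  using assms(1,4,5)
proof (induction Z arbitrary: w rule: finite_induct)
  case empty
  then show ?case by simp
next
  case (insert z Z)
  let ?q = "[:-z,1:]^(m z)"
  let ?R = "\<Prod>z\<in>Z. [:-z,1:]^(m z)"
  have P: "(\<Prod>z\<in>insert z Z. [:-z,1:]^(m z)) = ?q * ?R" using insert.hyps by simp
  have "poly ?R z \<noteq> 0" using insert.hyps by (auto simp: poly_prod prod_zero_iff poly_power)
  then have cp: "coprime ?q ?R" by (rule coprime_lin)
  obtain x y where xy: "x*?q + y*?R = 1" using bezout_poly[OF cp] by blast
  define w1 where "w1 = pe (y*?R) X w"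
  define w2 where "w2 = pe (x*?q) X w"
  have "w = pe (x*?q + y*?R) X w" by (simp add: xy)
  then have w: "w = w1 + w2" by (simp add: pe_add w1_def w2_def add.commute)
  have w1W: "w1 \<in> W" unfolding w1_def by (rule csub_pe[OF assms(2,3) insert.prems(1)])
  have w2W: "w2 \<in> W" unfolding w2_def by (rule csub_pe[OF assms(2,3) insert.prems(1)])
  have "pe ?q X w1 = pe (y * (?q * ?R)) X w"
    by (simp add: w1_def pe_mult[symmetric] ac_simps)
  also have "\<dots> = 0" using insert.prems(2) P by (simp add: pe_mult)
  finally have w1ge: "w1 \<in> gen_eigenspace X z" unfolding ge_pe by blast
  have "pe ?R X w2 = pe (x * (?q * ?R)) X w"
    by (simp add: w2_def pe_mult[symmetric] ac_simps)
  also have "\<dots> = 0" using insert.prems(2) P by (simp add: pe_mult)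
  finally have "pe ?R X w2 = 0" .
  then obtain g where g: "\<forall>z\<in>Z. g z \<in> W \<and> g z \<in> gen_eigenspace X z" "w2 = (\<Sum>z\<in>Z. g z)"
    using insert.IH[OF w2W] by blast
  let ?g = "g(z := w1)"
  have "(\<Sum>z'\<in>insert z Z. ?g z') = w1 + (\<Sum>z'\<in>Z. g z')"
    using insert.hyps by (simp add: sum.insert) (rule sum.cong, auto)
  then have "w = (\<Sum>z'\<in>insert z Z. ?g z')" using w g(2) by simp
  moreover have "\<forall>z'\<in>insert z Z. ?g z' \<in> W \<and> ?g z' \<in> gen_eigenspace X z'"
    using g(1) w1W w1ge by auto
  ultimately show ?case by blast
qed

lemma decomp:
  fixes X :: "complex^'n^'n"
  shows "\<exists>Z. finite Z \<and> (\<forall>W w. csubspace W \<longrightarrow> invariant X W \<longrightarrow> w \<in> W \<longrightarrow>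
     (\<exists>g. (\<forall>z\<in>Z. g z \<in> W \<and> g z \<in> gen_eigenspace X z) \<and> w = (\<Sum>z\<in>Z. g z)))"
proof -
  obtain p where p: "p \<noteq> 0" "\<And>v. pe p X v = 0" using annih by blast
  let ?Z = "{z. poly p z = 0}"
  have fin: "finite ?Z" using poly_roots_finite[OF p(1)] .
  have "\<forall>W w. csubspace W \<longrightarrow> invariant X W \<longrightarrow> w \<in> W \<longrightarrow>
     (\<exists>g. (\<forall>z\<in>?Z. g z \<in> W \<and> g z \<in> gen_eigenspace X z) \<and> w = (\<Sum>z\<in>?Z. g z))"
  proof (intro allI impI)
    fix W w assume W: "csubspace W" "invariant X W" "w \<in> W"
    have "pe p X w = pe (smult (lead_coeff p) (\<Prod>z\<in>?Z. [:-z,1:]^order z p)) X w"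
      by (simp only: complex_poly_decompose)
    then have "lead_coeff p *s pe (\<Prod>z\<in>?Z. [:-z,1:]^order z p) X w = 0"
      using p(2) by (simp add: pe_smult)
    then have "pe (\<Prod>z\<in>?Z. [:-z,1:]^order z p) X w = 0" using p(1) by simp
    then show "\<exists>g. (\<forall>z\<in>?Z. g z \<in> W \<and> g z \<in> gen_eigenspace X z) \<and> w = (\<Sum>z\<in>?Z. g z)"
      by (rule decomp_poly[OF fin W])
  qed
  with fin show ?thesis by blast
qed

lemma UN:
  fixes X :: "complex^'n^'n"
  shows "\<exists>k. \<forall>w\<in>gen_eigenspace X z. pe ([:-z,1:]^k) X w = 0"
proof -
  obtain p where p: "p \<noteq> 0" "\<And>v. pe p X v = 0" using annih by blast
  obtain r where r: "p = [:-z,1:]^order z p * r" "\<not> [:-z,1:] dvd r"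
    using order_decomp[OF p(1)] by blast
  have pr: "poly r z \<noteq> 0" using r(2) dvd_iff_poly_eq_0[of "-z" r] by simp
  show ?thesis
  proof (intro exI ballI)
    fix w assume w: "w \<in> gen_eigenspace X z"
    let ?w' = "pe ([:-z,1:]^order z p) X w"
    have "?w' \<in> gen_eigenspace X z" using w by (rule ge_pe_closed)
    then obtain j where j: "pe ([:-z,1:]^j) X ?w' = 0" unfolding ge_pe by blast
    have "pe r X ?w' = pe p X w" by (subst (2) r(1)) (simp add: pe_mult[symmetric] mult.commute)
    then have "pe r X ?w' = 0" using p(2) by simp
    moreover have "coprime ([:-z,1:]^j) r" using pr by (rule coprime_lin)
    ultimately show "?w' = 0" using coprime_kill j by blast
  qed
qed

lemma comm_ident:
  assumes h1: "\<And>v. Q *v (Y *v v) = Y *v (Q *v v) + M *v v"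
      and h2: "\<And>v. Q *v (M *v v) = M *v (Q *v v)"
  shows "mpow Q (Suc k) *v (Y *v v) = Y *v (mpow Q (Suc k) *v v) + of_nat (Suc k) *s (M *v (mpow Q k *v v))"
proof (induction k)
  case 0
  then show ?case by (simp add: mpow_Suc_v mpow_0 h1)
next
  case (Suc k)
  let ?u = "mpow Q (Suc k) *v v" and ?t = "mpow Q k *v v" and ?c = "of_nat (Suc k) :: complex"
  have "mpow Q (Suc (Suc k)) *v (Y *v v) = Q *v (Y *v ?u + ?c *s (M *v ?t))"
    by (simp only: mpow_Suc_v[of Q "Suc k"] Suc)
  also have "\<dots> = Q *v (Y *v ?u) + ?c *s (Q *v (M *v ?t))"
    by (simp add: matrix_vector_right_distrib vector_scalar_commute)
  also have "\<dots> = Y *v (Q *v ?u) + (M *v ?u + ?c *s (M *v ?u))"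
    by (simp add: h1 h2 mpow_Suc_v add.assoc)
  also have "M *v ?u + ?c *s (M *v ?u) = of_nat (Suc (Suc k)) *s (M *v ?u)"
    by (simp only: of_nat_Suc[of "Suc k"] vector_sadd_rdistrib vector_smult_lid)
  also have "Q *v ?u = mpow Q (Suc (Suc k)) *v v"
    by (simp only: mpow_Suc_v[of Q "Suc k"])
  finally show ?case .
qed

lemma comm_shift:
  fixes X Y M :: "complex^'n^'n"
  assumes h1: "\<And>v. Y *v (X *v v) = X *v (Y *v v) + M *v v"
  shows "(Y - mat \<mu>) *v (X *v v) = X *v ((Y - mat \<mu>) *v v) + M *v v"
  by (simp add: sub_mat_v h1 matrix_vector_mult_diff_distrib vector_scalar_commute)

lemma comm_shift2:
  fixes Y M :: "complex^'n^'n"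
  assumes h2: "\<And>v. Y *v (M *v v) = M *v (Y *v v)"
  shows "(Y - mat \<mu>) *v (M *v v) = M *v ((Y - mat \<mu>) *v v)"
  by (simp add: sub_mat_v h2 matrix_vector_mult_diff_distrib vector_scalar_commute)

lemma inv_lemma:
  fixes X Y M :: "complex^'n^'n"
  assumes h1: "\<And>v. Y *v (X *v v) = X *v (Y *v v) + M *v v"
      and h2: "\<And>v. Y *v (M *v v) = M *v (Y *v v)"
  shows "invariant X (gen_eigenspace Y \<mu>)"
  unfolding invariant_def gen_eigenspace_def
proof (intro ballI)
  fix v assume "v \<in> {v. \<exists>k. mpow (Y - mat \<mu>) k *v v = 0}"
  then obtain k where k: "mpow (Y - mat \<mu>) k *v v = 0" by blast
  have "mpow (Y - mat \<mu>) (Suc k) *v (X *v v) = X *v (mpow (Y - mat \<mu>) (Suc k) *v v)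
     + of_nat (Suc k) *s (M *v (mpow (Y - mat \<mu>) k *v v))"
    by (rule comm_ident[OF comm_shift[OF h1] comm_shift2[OF h2]])
  also have "\<dots> = 0" by (simp add: mpow_Suc_v k)
  finally have "mpow (Y - mat \<mu>) (Suc k) *v (X *v v) = 0" .
  then show "X *v v \<in> {v. \<exists>k. mpow (Y - mat \<mu>) k *v v = 0}" by blast
qed

lemma inv_comm:
  fixes X Y :: "complex^'n^'n"
  assumes "\<And>v. Y *v (X *v v) = X *v (Y *v v)"
  shows "invariant X (gen_eigenspace Y \<mu>)"
  by (rule inv_lemma[where M=0]) (simp_all add: assms)

lemma mpow_comm:
  assumes "\<And>v. X *v (Y *v v) = Y *v (X *v v)"
  shows "mpow X k *v (Y *v v) = Y *v (mpow X k *v v)"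
  by (induction k) (simp_all add: mpow_0 mpow_Suc_v assms)

lemma mv_neg: "(A::complex^'n^'n) *v (- x) = - (A *v x)"
  using matrix_vector_mult_diff_distrib[of A 0 x] by simp

lemma csub_inter: "csubspace S \<Longrightarrow> csubspace T \<Longrightarrow> csubspace (S \<inter> T)"
  by (simp add: csubspace_def)

lemma inv_inter: "invariant X S \<Longrightarrow> invariant X T \<Longrightarrow> invariant X (S \<inter> T)"
  by (simp add: invariant_def)

lemma eigvals_on:
  assumes "W \<subseteq> gen_eigenspace X z" "\<exists>v\<in>W. v \<noteq> 0"
  shows "gen_eigenvalues_on X W = {z}"
  unfolding gen_eigenvalues_on_def
  using assms ge_unique2 by blast

theorem mainTheorem8:
  fixes A B C :: "complex^'n^'n" and d :: nat
  assumes "d \<ge> 2"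
    and "B ** C = C ** B"
    and "C ** A = A ** C"
    and "A ** B - B ** A + mat (of_nat d) ** mpow C (d - 1) = 0"
  shows "(\<forall>X\<in>{A, B, C}. \<forall>Y\<in>{A, B, C}. \<forall>\<mu>. invariant X (gen_eigenspace Y \<mu>))
    \<and> (\<exists>k. mpow C k = 0)
    \<and> gen_eigenvalues_on C UNIV = {0}
    \<and> (\<exists>\<Sigma> :: (complex \<times> complex) set. \<exists>V :: complex \<times> complex \<Rightarrow> (complex^'n) set.
         finite \<Sigma> \<and> is_direct_sum \<Sigma> V \<and>
         (\<forall>s\<in>\<Sigma>. V s = gen_eigenspace A (fst s) \<inter> gen_eigenspace B (snd s)
              \<and> csubspace (V s) \<and> V s \<noteq> {0}
              \<and> invariant A (V s) \<and> invariant B (V s) \<and> invariant C (V s)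
              \<and> gen_eigenvalues_on A (V s) = {fst s}
              \<and> gen_eigenvalues_on B (V s) = {snd s}
              \<and> gen_eigenvalues_on C (V s) = {0}))"
proof -
  define K where "K = mpow C (d - 1)"
  define Mp where "Mp = mat (of_nat d) ** K"
  define Mn where "Mn = mat (- of_nat d) ** K"
  have Mp_v: "Mp *v v = of_nat d *s (K *v v)" for v
    by (simp add: Mp_def matrix_vector_mul_assoc[symmetric] mat_v)
  have Mn_v: "Mn *v v = - (of_nat d *s (K *v v))" for v
    by (simp add: Mn_def matrix_vector_mul_assoc[symmetric] mat_v vector_smult_lneg)
  have hBC: "B *v (C *v v) = C *v (B *v v)" for v
    by (simp add: matrix_vector_mul_assoc assms(2))
  have hCA: "C *v (A *v v) = A *v (C *v v)" for v
    by (simp add: matrix_vector_mul_assoc assms(3))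
  have hAB: "A *v (B *v v) = B *v (A *v v) - of_nat d *s (K *v v)" for v
  proof -
    have "(A ** B - B ** A + mat (of_nat d) ** mpow C (d - 1)) *v v = 0" using assms(4) by simp
    then have "A *v (B *v v) - B *v (A *v v) + of_nat d *s (K *v v) = 0"
      by (simp add: matrix_vector_mult_add_rdistrib matrix_vector_mult_diff_rdistrib
          matrix_vector_mul_assoc[symmetric] mat_v K_def)
    then show ?thesis by (simp add: algebra_simps eq_diff_eq)
  qed
  have KA: "A *v (K *v v) = K *v (A *v v)" for v
    unfolding K_def by (rule mpow_comm[symmetric]) (simp add: hCA)
  have KB: "B *v (K *v v) = K *v (B *v v)" for v
    unfolding K_def by (rule mpow_comm[symmetric]) (simp add: hBC)
  have i1: "invariant A (gen_eigenspace B \<mu>)" for \<mu>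
    by (rule inv_lemma[where M=Mp]) (simp_all add: Mp_v hAB KB vector_scalar_commute)
  have i2: "invariant B (gen_eigenspace A \<mu>)" for \<mu>
    by (rule inv_lemma[where M=Mn]) (simp_all add: Mn_v hAB KA vector_scalar_commute mv_neg)
  have iAA: "invariant A (gen_eigenspace A \<mu>)" for \<mu> by (rule inv_comm) simp
  have iBB: "invariant B (gen_eigenspace B \<mu>)" for \<mu> by (rule inv_comm) simp
  have iCC: "invariant C (gen_eigenspace C \<mu>)" for \<mu> by (rule inv_comm) simp
  have iAC: "invariant A (gen_eigenspace C \<mu>)" for \<mu> by (rule inv_comm) (simp add: hCA)
  have iCA: "invariant C (gen_eigenspace A \<mu>)" for \<mu> by (rule inv_comm) (simp add: hCA)
  have iBC: "invariant B (gen_eigenspace C \<mu>)" for \<mu> by (rule inv_comm) (simp add: hBC)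
  have iCB: "invariant C (gen_eigenspace B \<mu>)" for \<mu> by (rule inv_comm) (simp add: hBC)
  have partA: "\<forall>X\<in>{A, B, C}. \<forall>Y\<in>{A, B, C}. \<forall>\<mu>. invariant X (gen_eigenspace Y \<mu>)"
    using i1 i2 iAA iBB iCC iAC iCA iBC iCB by auto

  obtain ZA where ZA: "finite ZA" "\<And>W w. csubspace W \<Longrightarrow> invariant A W \<Longrightarrow> w \<in> W \<Longrightarrow>
     (\<exists>g. (\<forall>z\<in>ZA. g z \<in> W \<and> g z \<in> gen_eigenspace A z) \<and> w = (\<Sum>z\<in>ZA. g z))"
    using decomp[of A] by blast
  obtain ZB where ZB: "finite ZB" "\<And>W w. csubspace W \<Longrightarrow> invariant B W \<Longrightarrow> w \<in> W \<Longrightarrow>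
     (\<exists>g. (\<forall>z\<in>ZB. g z \<in> W \<and> g z \<in> gen_eigenspace B z) \<and> w = (\<Sum>z\<in>ZB. g z))"
    using decomp[of B] by blast
  obtain ZC where ZC: "finite ZC" "\<And>W w. csubspace W \<Longrightarrow> invariant C W \<Longrightarrow> w \<in> W \<Longrightarrow>
     (\<exists>g. (\<forall>z\<in>ZC. g z \<in> W \<and> g z \<in> gen_eigenspace C z) \<and> w = (\<Sum>z\<in>ZC. g z))"
    using decomp[of C] by blast
  have d0: "d \<noteq> 0" using assms(1) by simp
  have K0: "K *v t = 0 \<Longrightarrow> t \<in> gen_eigenspace C 0" for t
    unfolding gen_eigenspace_def K_def by auto

  have GC0: "gen_eigenspace C lam = {0}" if hlam: "lam \<noteq> 0" for lam
  proof (rule ccontr)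
    assume ne: "gen_eigenspace C lam \<noteq> {0}"
    have "0 \<in> gen_eigenspace C lam" using ge_csub csubspace_def by blast
    then obtain v where v: "v \<in> gen_eigenspace C lam" "v \<noteq> 0" using ne by blast
    obtain g where g: "\<forall>z\<in>ZA. g z \<in> gen_eigenspace C lam \<and> g z \<in> gen_eigenspace A z"
      "v = (\<Sum>z\<in>ZA. g z)"
      using ZA(2)[OF ge_csub iAC v(1)] by blast
    obtain \<alpha> where \<alpha>: "\<alpha> \<in> ZA" "g \<alpha> \<noteq> 0"
      using g(2) v(2) by (metis (mono_tags, lifting) sum.neutral)
    define W' where "W' = gen_eigenspace C lam \<inter> gen_eigenspace A \<alpha>"
    have gW': "g \<alpha> \<in> W'" using g(1) \<alpha>(1) by (simp add: W'_def)
    define P where "P k = (\<forall>w\<in>W'. pe ([:-\<alpha>,1:]^k) A w = 0)" for k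
    obtain k0 where "\<forall>w\<in>gen_eigenspace A \<alpha>. pe ([:-\<alpha>,1:]^k0) A w = 0" using UN by blast
    then have Pk0: "P k0" by (auto simp: P_def W'_def)
    define k where "k = (LEAST k. P k)"
    have Pk: "P k" unfolding k_def by (rule LeastI[of P k0, OF Pk0])
    have "k \<noteq> 0"
    proof
      assume "k = 0" then have "P 0" using Pk by simp
      then show False using gW' \<alpha>(2) by (simp add: P_def)
    qed
    then obtain j where kj: "k = Suc j" by (cases k) auto
    have "P j"
      unfolding P_def
    proof
      fix w assume w: "w \<in> W'"
      let ?Q = "A - mat \<alpha>"
      let ?t = "mpow ?Q j *v w"
      have Bw: "B *v w \<in> W'" using w i2 iBC by (auto simp: W'_def invariant_def)
      have h1: "\<And>v. ?Q *v (B *v v) = B *v (?Q *v v) + Mn *v v"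
        by (rule comm_shift) (simp add: hAB Mn_v)
      have h2: "\<And>v. ?Q *v (Mn *v v) = Mn *v (?Q *v v)"
        by (rule comm_shift2) (simp add: Mn_v KA vector_scalar_commute mv_neg)
      have eq: "mpow ?Q (Suc j) *v (B *v w) = B *v (mpow ?Q (Suc j) *v w) + of_nat (Suc j) *s (Mn *v ?t)"
        by (rule comm_ident[OF h1 h2])
      have Pk': "\<forall>w\<in>W'. mpow ?Q (Suc j) *v w = 0" using Pk kj unfolding P_def pe_pow_lin by simp
      have z1: "mpow ?Q (Suc j) *v (B *v w) = 0" using Pk' Bw by blast
      have z2: "mpow ?Q (Suc j) *v w = 0" using Pk' w by blast
      from eq z1 z2 have "of_nat (Suc j) *s (Mn *v ?t) = (0::complex^'n)"
        by (metis add_0 matrix_vector_mult_0_right)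
      then have "Mn *v ?t = 0" by (simp del: of_nat_Suc)
      then have "K *v ?t = 0" using d0 by (simp add: Mn_v)
      then have t0: "?t \<in> gen_eigenspace C 0" by (rule K0)
      have "?t = pe ([:-\<alpha>,1:]^j) A w" by (simp add: pe_pow_lin)
      then have "?t \<in> gen_eigenspace C lam" using w csub_pe[OF ge_csub iAC] by (simp add: W'_def)
      then have "?t = 0" using ge_unique2 t0 hlam by blast
      then show "pe ([:-\<alpha>,1:]^j) A w = 0" by (simp add: pe_pow_lin)
    qed
    moreover have "\<not> P j" using kj not_less_Least[of j P] k_def by simp
    ultimately show False by simp
  qed

  have csU: "csubspace (UNIV :: (complex^'n) set)" by (simp add: csubspace_def)
  have allGC0: "v \<in> gen_eigenspace C 0" for v
  proof -
    obtain g where g: "\<forall>z\<in>ZC. g z \<in> gen_eigenspace C z" "v = (\<Sum>z\<in>ZC. g z)"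
      using ZC(2)[OF csU, of v] by (auto simp: invariant_def)
    have "\<forall>z\<in>ZC. g z \<in> gen_eigenspace C 0"
    proof
      fix z assume z: "z \<in> ZC"
      show "g z \<in> gen_eigenspace C 0"
      proof (cases "z = 0")
        case True then show ?thesis using g(1) z by simp
      next
        case False then have "g z = 0" using g(1) z GC0 by blast
        then show ?thesis using ge_csub csubspace_def by metis
      qed
    qed
    then show ?thesis using g(2) csub_sum[OF ge_csub] by simp
  qed
  have nil: "\<exists>k. mpow C k = 0"
  proof -
    obtain k where k: "\<forall>w\<in>gen_eigenspace C 0. pe ([:-0,1:]^k) C w = 0" using UN by blast
    have "mpow C k *v w = 0 *v w" for w
      using k allGC0[of w] pe_pow_lin[of 0 k C w] by simp
    then show ?thesis using matrix_eq by blast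
  qed
  have ax: "axis undefined (1::complex) \<noteq> (0::complex^'n)" by (simp add: axis_eq_0_iff)
  have evC: "gen_eigenvalues_on C UNIV = {0}"
    by (rule eigvals_on) (use allGC0 ax in auto)

  define V where "V = (\<lambda>s::complex \<times> complex. gen_eigenspace A (fst s) \<inter> gen_eigenspace B (snd s))"
  define \<Sigma> where "\<Sigma> = {s \<in> ZA \<times> ZB. V s \<noteq> {0}}"
  have finS: "finite \<Sigma>" unfolding \<Sigma>_def using ZA(1) ZB(1) by simp
  have csV: "csubspace (V s)" for s by (simp add: V_def csub_inter ge_csub)
  have V0: "0 \<in> V s" for s using csV csubspace_def by blast
  have props: "\<forall>s\<in>\<Sigma>. V s = gen_eigenspace A (fst s) \<inter> gen_eigenspace B (snd s)
              \<and> csubspace (V s) \<and> V s \<noteq> {0}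
              \<and> invariant A (V s) \<and> invariant B (V s) \<and> invariant C (V s)
              \<and> gen_eigenvalues_on A (V s) = {fst s}
              \<and> gen_eigenvalues_on B (V s) = {snd s}
              \<and> gen_eigenvalues_on C (V s) = {0}"
  proof
    fix s assume s: "s \<in> \<Sigma>"
    have ne: "\<exists>v\<in>V s. v \<noteq> 0" using s V0 by (auto simp: \<Sigma>_def)
    show "V s = gen_eigenspace A (fst s) \<inter> gen_eigenspace B (snd s)
              \<and> csubspace (V s) \<and> V s \<noteq> {0}
              \<and> invariant A (V s) \<and> invariant B (V s) \<and> invariant C (V s)
              \<and> gen_eigenvalues_on A (V s) = {fst s}
              \<and> gen_eigenvalues_on B (V s) = {snd s}
              \<and> gen_eigenvalues_on C (V s) = {0}"
      using s csV ne
      by (auto simp: \<Sigma>_def V_def intro!: inv_inter iAA iBB i1 i2 iCA iCB eigvals_on allGC0)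
  qed
  have ds: "is_direct_sum \<Sigma> V"
    unfolding is_direct_sum_def
  proof (intro conjI allI impI)
    fix v :: "complex^'n"
    obtain g where g: "\<forall>z\<in>ZA. g z \<in> gen_eigenspace A z" "v = (\<Sum>z\<in>ZA. g z)"
      using ZA(2)[OF csU, of v] by (auto simp: invariant_def)
    have "\<forall>\<alpha>\<in>ZA. \<exists>h. (\<forall>\<beta>\<in>ZB. h \<beta> \<in> gen_eigenspace A \<alpha> \<and> h \<beta> \<in> gen_eigenspace B \<beta>) \<and> g \<alpha> = (\<Sum>\<beta>\<in>ZB. h \<beta>)"
      using ZB(2)[OF ge_csub i2] g(1) by blast
    then obtain H where H: "\<forall>\<alpha>\<in>ZA. (\<forall>\<beta>\<in>ZB. H \<alpha> \<beta> \<in> gen_eigenspace A \<alpha> \<and> H \<alpha> \<beta> \<in> gen_eigenspace B \<beta>) \<and> g \<alpha> = (\<Sum>\<beta>\<in>ZB. H \<alpha> \<beta>)"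
      by (metis (no_types) bchoice)
    define f where "f s = H (fst s) (snd s)" for s
    have fV: "\<forall>s\<in>ZA \<times> ZB. f s \<in> V s" using H by (auto simp: f_def V_def)
    have "(\<Sum>s\<in>\<Sigma>. f s) = (\<Sum>s\<in>ZA \<times> ZB. f s)"
    proof (rule sum.mono_neutral_left)
      show "finite (ZA \<times> ZB)" using ZA(1) ZB(1) by simp
      show "\<Sigma> \<subseteq> ZA \<times> ZB" by (auto simp: \<Sigma>_def)
      show "\<forall>i\<in>ZA \<times> ZB - \<Sigma>. f i = 0" using fV by (auto simp: \<Sigma>_def)
    qed
    also have "\<dots> = (\<Sum>\<alpha>\<in>ZA. \<Sum>\<beta>\<in>ZB. H \<alpha> \<beta>)"
      by (simp add: sum.cartesian_product f_def case_prod_beta)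
    also have "\<dots> = v" using H g(2) by simp
    finally have "v = (\<Sum>s\<in>\<Sigma>. f s)" by simp
    moreover have "\<forall>s\<in>\<Sigma>. f s \<in> V s" using fV by (auto simp: \<Sigma>_def)
    ultimately show "\<exists>f. (\<forall>s\<in>\<Sigma>. f s \<in> V s) \<and> v = (\<Sum>s\<in>\<Sigma>. f s)" by blast
  next
    fix f assume hf: "(\<forall>s\<in>\<Sigma>. f s \<in> V s) \<and> (\<Sum>s\<in>\<Sigma>. f s) = 0"
    define F where "F s = (if s \<in> \<Sigma> then f s else 0)" for s
    have FV: "F s \<in> V s" for s using hf V0 by (simp add: F_def)
    have "(\<Sum>s\<in>ZA \<times> ZB. F s) = (\<Sum>s\<in>\<Sigma>. F s)"
    proof (rule sum.mono_neutral_right)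
      show "finite (ZA \<times> ZB)" using ZA(1) ZB(1) by simp
      show "\<Sigma> \<subseteq> ZA \<times> ZB" by (auto simp: \<Sigma>_def)
      show "\<forall>i\<in>ZA \<times> ZB - \<Sigma>. F i = 0" by (simp add: F_def)
    qed
    also have "\<dots> = 0" using hf by (simp add: F_def)
    finally have "(\<Sum>\<alpha>\<in>ZA. \<Sum>\<beta>\<in>ZB. F (\<alpha>, \<beta>)) = 0"
      by (simp add: sum.cartesian_product)
    moreover have "\<forall>\<alpha>\<in>ZA. (\<Sum>\<beta>\<in>ZB. F (\<alpha>, \<beta>)) \<in> gen_eigenspace A \<alpha>"
      using FV by (auto simp: V_def intro!: csub_sum[OF ge_csub])
    ultimately have G0: "\<forall>\<alpha>\<in>ZA. (\<Sum>\<beta>\<in>ZB. F (\<alpha>, \<beta>)) = 0"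
      using ge_sum_unique[OF ZA(1), of "\<lambda>\<alpha>. \<Sum>\<beta>\<in>ZB. F (\<alpha>, \<beta>)" A] by blast
    have "\<forall>\<alpha>\<in>ZA. \<forall>\<beta>\<in>ZB. F (\<alpha>, \<beta>) = 0"
    proof
      fix \<alpha> assume "\<alpha> \<in> ZA"
      then have "(\<Sum>\<beta>\<in>ZB. F (\<alpha>, \<beta>)) = 0" using G0 by blast
      moreover have "\<forall>\<beta>\<in>ZB. F (\<alpha>, \<beta>) \<in> gen_eigenspace B \<beta>" using FV by (auto simp: V_def)
      ultimately show "\<forall>\<beta>\<in>ZB. F (\<alpha>, \<beta>) = 0" using ge_sum_unique[OF ZB(1), of "\<lambda>\<beta>. F (\<alpha>, \<beta>)" B] by blast
    qed
    then show "\<forall>s\<in>\<Sigma>. f s = 0"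
    proof (intro ballI)
      fix s assume all0: "\<forall>\<alpha>\<in>ZA. \<forall>\<beta>\<in>ZB. F (\<alpha>, \<beta>) = 0" and s: "s \<in> \<Sigma>"
      then have "F s = 0" by (cases s) (auto simp: \<Sigma>_def)
      then show "f s = 0" using s by (simp add: F_def)
    qed
  qed
  show ?thesis using partA nil evC finS ds props by blast
qed

end
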